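(* Let $\rho:\mathbb{N}\to\mathbb{R}$ and $\beta>0$ be such that $\rho(t)=\mathcal{O}(e^{-\beta t})$, i.e. $|\rho(t)|\le c\,e^{-\beta t}$ for some $c>0$ and all $t\in\mathbb{N}$. Then for every $n\in\{1,\dots,\lfloor99\beta\rfloor\}$ there exists a constant $C(n)$ (depending on $n$, $\beta$ and $c$ but not on $m$) such that for every $m\in\mathbb{N}_+$ there is a function $\phi(t)=\sum_{k=1}^m\alpha_ke^{-\beta_kt}$ with $\beta_k>0$ for all $k\in[m]$ and $$\sum_{t=0}^\infty|\rho(t)-\phi(t)|\le\frac{C(n)}{m^n}.$$
   Context: $\mathbb{N}=\{0,1,2,\dots\}$; $[m]=\{1,\dots,m\}$. *)

theory Defs
  imports "HOL-Analysis.Analysis"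
begin

end

theory Submission imports Defs begin
lemma exp_ge_pow: fixes x :: real assumes "x \<ge> 0" shows "x ^ n / fact n \<le> exp x"
proof -
  have s: "summable (\<lambda>k. x ^ k / fact k)" using summable_exp[of x] by (simp add: divide_inverse mult.commute)
  have "x ^ n / fact n \<le> (\<Sum>k. x ^ k / fact k)"
    using sum_le_suminf[OF s, of "{n}"] assms by auto
  also have "\<dots> = exp x" by (simp add: exp_def divide_inverse mult.commute  scaleR_conv_of_real)
  finally show ?thesis .
qed

lemma approx:
  fixes \<rho> :: "nat \<Rightarrow> real"
  assumes "summable (\<lambda>t. \<bar>\<rho> t\<bar>)" "\<epsilon> > 0"
  shows "\<exists>\<alpha> b. (\<forall>k\<in>{1..N}. b k > 0) \<and>
     summable (\<lambda>t. \<bar>\<rho> t - (\<Sum>k=1..N. \<alpha> k * exp (- b k * real t))\<bar>) \<and>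
     (\<Sum>t. \<bar>\<rho> t - (\<Sum>k=1..N. \<alpha> k * exp (- b k * real t))\<bar>) \<le> (\<Sum>t. \<bar>\<rho> (t+N)\<bar>) + \<epsilon>"
  using assms
proof (induction N arbitrary: \<rho> \<epsilon>)
  case 0
  then show ?case by (intro exI[of _ "\<lambda>_. 0"] exI[of _ "\<lambda>_. 1"]) auto
next
  case (Suc N)
  define \<rho>' where "\<rho>' = (\<lambda>t. \<rho> (Suc t))"
  have s': "summable (\<lambda>t. \<bar>\<rho>' t\<bar>)" using Suc.prems(1) unfolding \<rho>'_def
    by (subst summable_Suc_iff) 
  obtain \<alpha> b where bpos: "\<forall>k\<in>{1..N}. b k > 0"
    and sm: "summable (\<lambda>t. \<bar>\<rho>' t - (\<Sum>k=1..N. \<alpha> k * exp (- b k * real t))\<bar>)"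
    and le: "(\<Sum>t. \<bar>\<rho>' t - (\<Sum>k=1..N. \<alpha> k * exp (- b k * real t))\<bar>) \<le> (\<Sum>t. \<bar>\<rho>' (t+N)\<bar>) + \<epsilon>/2"
    using Suc.IH[OF s', of "\<epsilon>/2"] Suc.prems(2) by auto
  define \<psi> where "\<psi> = (\<lambda>t. (\<Sum>k=1..N. \<alpha> k * exp (- b k * real t)))"
  define d where "d = \<rho> 0 - (\<Sum>k=1..N. \<alpha> k * exp (b k))"
  define y where "y = min (1/2) (\<epsilon> / (4 * (\<bar>d\<bar> + 1)))"
  have y0: "y > 0" using Suc.prems(2) unfolding y_def by (simp add: add_pos_nonneg)
  have y1: "y \<le> 1/2" unfolding y_def by (rule min.cobounded1)
  have yb: "\<bar>d\<bar> * (y / (1 - y)) \<le> \<epsilon> / 2"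
  proof -
    have "y / (1 - y) \<le> 2 * y" using y0 y1 by (simp add: field_simps)
    also have "\<dots> \<le> 2 * (\<epsilon> / (4 * (\<bar>d\<bar> + 1)))" unfolding y_def by simp
    also have "\<dots> = \<epsilon> / (2 * (\<bar>d\<bar> + 1))"
      by (simp add: field_simps add_pos_nonneg)
    finally have "\<bar>d\<bar> * (y / (1 - y)) \<le> \<bar>d\<bar> * (\<epsilon> / (2 * (\<bar>d\<bar> + 1)))"
      by (rule mult_left_mono) simp_all
    also have "\<dots> \<le> \<epsilon> / 2" using Suc.prems(2) by (simp add: field_simps)
    finally show ?thesis .
  qed
  define \<alpha>' where "\<alpha>' = (\<lambda>k. if k = Suc N then d else \<alpha> k * exp (b k))"
  define b' where "b' = (\<lambda>k. if k = Suc N then - ln y else b k)"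
  define \<phi> where "\<phi> = (\<lambda>t. (\<Sum>k=1..Suc N. \<alpha>' k * exp (- b' k * real t)))"
  have ey: "exp (- (- ln y) * real t) = y ^ t" for t
    using y0 exp_of_nat_mult[of t "ln y"] by (simp add: mult.commute)
  have ey2: "exp (ln y * real t) = y ^ t" for t
    using y0 exp_of_nat_mult[of t "ln y"] by (simp add: mult.commute)
  have phi: "\<phi> t = (\<Sum>k=1..N. \<alpha> k * exp (b k) * exp (- b k * real t)) + d * y ^ t" for t
    unfolding \<phi>_def by (simp add: \<alpha>'_def b'_def ey ey2)
  have phi0: "\<phi> 0 = \<rho> 0" unfolding phi d_def by simp
  have phiS: "\<phi> (Suc s) = \<psi> s + d * y ^ Suc s" for s
  proof -
    have "\<alpha> k * exp (b k) * exp (- b k * real (Suc s)) = \<alpha> k * exp (- b k * real s)" for k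
      by (simp add: mult.assoc exp_add[symmetric] algebra_simps)
    then have "(\<Sum>k=1..N. \<alpha> k * exp (b k) * exp (- b k * real (Suc s))) = \<psi> s"
      unfolding \<psi>_def by (intro sum.cong) auto
    then show ?thesis unfolding phi by simp
  qed
  define e where "e = (\<lambda>t. \<bar>\<rho> t - \<phi> t\<bar>)"
  have eS: "e (Suc s) \<le> \<bar>\<rho>' s - \<psi> s\<bar> + \<bar>d\<bar> * y ^ Suc s" for s
  proof -
    have "\<bar>d * y ^ Suc s\<bar> = \<bar>d\<bar> * y ^ Suc s" using y0 by (simp add: abs_mult)
    then show ?thesis unfolding e_def phiS \<rho>'_def by linarith
  qed
  have gs: "summable (\<lambda>s. y ^ Suc s)" using y0 y1 by (simp add: summable_geometric)
  have gsum: "(\<Sum>s. y ^ Suc s) = y / (1 - y)"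
    using suminf_mult[OF summable_geometric[of y], of y] suminf_geometric[of y] y0 y1 by simp
  have sm2: "summable (\<lambda>s. \<bar>\<rho>' s - \<psi> s\<bar> + \<bar>d\<bar> * y ^ Suc s)"
    using sm gs unfolding \<psi>_def by (intro summable_add summable_mult) auto
  have seS: "summable (\<lambda>s. e (Suc s))"
    by (rule summable_comparison_test[OF _ sm2]) (use eS e_def in auto)
  have se: "summable e" using seS by (subst summable_Suc_iff[symmetric])
  have "suminf e = (\<Sum>s. e (Suc s))" using suminf_split_head[OF se] phi0 e_def by simp
  also have "\<dots> \<le> (\<Sum>s. \<bar>\<rho>' s - \<psi> s\<bar> + \<bar>d\<bar> * y ^ Suc s)"
    by (rule suminf_le[OF eS seS sm2])
  also have "\<dots> = (\<Sum>s. \<bar>\<rho>' s - \<psi> s\<bar>) + \<bar>d\<bar> * (y / (1 - y))"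
    using suminf_add[of "\<lambda>s. \<bar>\<rho>' s - \<psi> s\<bar>" "\<lambda>s. \<bar>d\<bar> * y ^ Suc s"] sm gs
      suminf_mult[OF gs, of "\<bar>d\<bar>"] gsum unfolding \<psi>_def by simp
  also have "\<dots> \<le> (\<Sum>t. \<bar>\<rho>' (t+N)\<bar>) + \<epsilon>/2 + \<epsilon>/2"
    using le yb unfolding \<psi>_def by linarith
  also have "\<dots> = (\<Sum>t. \<bar>\<rho> (t + Suc N)\<bar>) + \<epsilon>" unfolding \<rho>'_def by simp
  finally have fin: "suminf e \<le> (\<Sum>t. \<bar>\<rho> (t + Suc N)\<bar>) + \<epsilon>" .
  have bpos': "\<forall>k\<in>{1..Suc N}. b' k > 0"
    using bpos y0 y1 unfolding b'_def by auto
  show ?case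
    apply (rule exI[of _ \<alpha>'], rule exI[of _ b'])
    using bpos' se fin unfolding e_def \<phi>_def by simp
qed
theorem lemmaF3:
  fixes \<beta> c :: real and n :: nat
  assumes "\<beta> > 0" and "c > 0"
    and "1 \<le> n" and "int n \<le> \<lfloor>99 * \<beta>\<rfloor>"
  shows "\<exists>C::real. \<forall>\<rho>::nat \<Rightarrow> real.
           (\<forall>t. \<bar>\<rho> t\<bar> \<le> c * exp (- \<beta> * real t)) \<longrightarrow>
           (\<forall>m::nat. m \<ge> 1 \<longrightarrow>
              (\<exists>(\<alpha>::nat \<Rightarrow> real) (b::nat \<Rightarrow> real).
                 (\<forall>k\<in>{1..m}. b k > 0) \<and>
                 summable (\<lambda>t. \<bar>\<rho> t - (\<Sum>k=1..m. \<alpha> k * exp (- b k * real t))\<bar>) \<and>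
                 (\<Sum>t. \<bar>\<rho> t - (\<Sum>k=1..m. \<alpha> k * exp (- b k * real t))\<bar>) \<le> C / real m ^ n))"
proof -
  define q where "q = exp (- \<beta>)"
  have q0: "q > 0" and q1: "q < 1" using assms(1) unfolding q_def by auto
  define S where "S = c / (1 - q)"
  have S0: "S > 0" using q1 assms(2) unfolding S_def by simp
  have eq: "exp (- \<beta> * real t) = q ^ t" for t
    unfolding q_def using exp_of_nat_mult[of t "- \<beta>"] by (simp add: mult.commute)
  show ?thesis
  proof (intro exI[of _ "2 * S * fact n / \<beta> ^ n"] allI impI)
    fix \<rho> :: "nat \<Rightarrow> real" and m :: nat
    assume hr: "\<forall>t. \<bar>\<rho> t\<bar> \<le> c * exp (- \<beta> * real t)" and m1: "m \<ge> 1"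
    have hr': "\<bar>\<rho> t\<bar> \<le> c * q ^ t" for t using hr eq by simp
    have gs: "summable (\<lambda>t. c * q ^ t)" using q0 q1 by (intro summable_mult summable_geometric) simp
    have sr: "summable (\<lambda>t. \<bar>\<rho> t\<bar>)"
      by (rule summable_comparison_test[OF _ gs]) (use hr' in auto)
    have gsm: "summable (\<lambda>t. c * q ^ (t + m))"
      using gs by (subst summable_iff_shift) 
    have srm: "summable (\<lambda>t. \<bar>\<rho> (t + m)\<bar>)"
      using sr by (subst summable_iff_shift) 
    have tail: "(\<Sum>t. \<bar>\<rho> (t + m)\<bar>) \<le> S * q ^ m"
    proof -
      have "(\<Sum>t. \<bar>\<rho> (t + m)\<bar>) \<le> (\<Sum>t. c * q ^ (t + m))"
        by (rule suminf_le[OF _ srm gsm]) (use hr' in auto)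
      also have "\<dots> = (\<Sum>t. (c * q ^ m) * q ^ t)" by (simp add: power_add algebra_simps)
      also have "\<dots> = (c * q ^ m) * (1 / (1 - q))"
        using suminf_mult[OF summable_geometric[of q], of "c * q ^ m"] suminf_geometric[of q] q0 q1
        by simp
      also have "\<dots> = S * q ^ m" unfolding S_def by simp
      finally show ?thesis .
    qed
    have eps: "S * q ^ m > 0" using S0 q0 by simp
    obtain \<alpha> b where bp: "\<forall>k\<in>{1..m}. b k > 0"
      and sm: "summable (\<lambda>t. \<bar>\<rho> t - (\<Sum>k=1..m. \<alpha> k * exp (- b k * real t))\<bar>)"
      and le: "(\<Sum>t. \<bar>\<rho> t - (\<Sum>k=1..m. \<alpha> k * exp (- b k * real t))\<bar>) \<le> (\<Sum>t. \<bar>\<rho> (t+m)\<bar>) + S * q ^ m"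
      using approx[OF sr eps, of m] by blast
    have key: "q ^ m * real m ^ n \<le> fact n / \<beta> ^ n"
    proof -
      have "(\<beta> * real m) ^ n / fact n \<le> exp (\<beta> * real m)"
        using assms(1) by (intro exp_ge_pow) simp
      moreover have "q ^ m = 1 / exp (\<beta> * real m)"
        using eq[of m] by (simp add: exp_minus field_simps)
      ultimately have A: "\<beta> ^ n * real m ^ n \<le> fact n * exp (\<beta> * real m)"
        and B: "q ^ m * exp (\<beta> * real m) = 1"
        by (simp_all add: field_simps power_mult_distrib)
      have "q ^ m * (\<beta> ^ n * real m ^ n) \<le> q ^ m * (fact n * exp (\<beta> * real m))"
        using A q0 by (intro mult_left_mono) auto
      also have "\<dots> = fact n" using B by (simp add: algebra_simps)
      finally show ?thesis using assms(1) by (simp add: field_simps)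
    qed
    have "2 * S * q ^ m \<le> 2 * S * fact n / \<beta> ^ n / real m ^ n"
    proof -
      have mp: "real m ^ n > 0" using m1 by simp
      have "2 * S * (q ^ m * real m ^ n) \<le> 2 * S * (fact n / \<beta> ^ n)"
        using key S0 by (intro mult_left_mono) auto
      then have "2 * S * q ^ m * real m ^ n \<le> 2 * S * fact n / \<beta> ^ n"
        by (simp add: mult.assoc)
      then show ?thesis by (subst pos_le_divide_eq[OF mp])
    qed
    then show "\<exists>(\<alpha>::nat \<Rightarrow> real) (b::nat \<Rightarrow> real).
                 (\<forall>k\<in>{1..m}. b k > 0) \<and>
                 summable (\<lambda>t. \<bar>\<rho> t - (\<Sum>k=1..m. \<alpha> k * exp (- b k * real t))\<bar>) \<and>
                 (\<Sum>t. \<bar>\<rho> t - (\<Sum>k=1..m. \<alpha> k * exp (- b k * real t))\<bar>) \<le> 2 * S * fact n / \<beta> ^ n / real m ^ n"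
      using bp sm le tail by (intro exI[of _ \<alpha>] exI[of _ b]) auto
  qed
qed

end
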